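(* Let $G$ be an arithmetic semigroup satisfying $N_G(x)=Ax+\mathcal{O}\!\left(\frac{x}{\log^\gamma x}\right)$ with $1<\gamma\le2$ and $A\in\mathbb{R}$, and let $\zeta=\zeta_G$. Then: (1) if $\gamma<2$ is fixed, $\zeta(1+\mathrm{i}t)\ll t^{1/\gamma}$ for $t>1$; (2) if $\gamma=2$, $\zeta(1+\mathrm{i}t)\ll\sqrt{t\log t}$ for $t>1$.
   Context: An arithmetic semigroup is a commutative semigroup $(G,\cdot)$ with identity together with a multiplicative norm $\|\cdot\|\colon G\to[1,\infty)$ such that $N_G(x)=|\{g\in G:\|g\|\le x\}|$ is finite for every $x$, the identity is the unique element of norm $1$, and decomposition into irreducible elements is unique. Its zeta function is $\zeta_G(s)=\sum_{g\in G}\|g\|^{-s}$ for $\Re s>1$; for $t\neq0$ the value $\zeta_G(1+\mathrm{i}t)$ denotes the boundary value $\lim_{\sigma\to1^+}\zeta_G(\sigma+\mathrm{i}t)$ (which exists under the hypothesis). *)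

theory Defs
  imports "HOL-Analysis.Analysis" "HOL-Library.Landau_Symbols" "HOL-Library.Multiset"
begin

text \<open>An arithmetic semigroup: the commutative monoid is the whole type 'a
  (with identity 1), together with a norm function nrm.\<close>

definition arith_irred :: "'a::comm_monoid_mult \<Rightarrow> bool" where
  "arith_irred p \<longleftrightarrow> p \<noteq> 1 \<and> (\<forall>a b. p = a * b \<longrightarrow> a = 1 \<or> b = 1)"

definition arith_semigroup :: "('a::comm_monoid_mult \<Rightarrow> real) \<Rightarrow> bool" where
  "arith_semigroup nrm \<longleftrightarrow>
     (\<forall>g h. nrm (g * h) = nrm g * nrm h) \<and>
     (\<forall>g. nrm g \<ge> 1) \<and>
     (\<forall>g. nrm g = 1 \<longleftrightarrow> g = 1) \<and>
     (\<forall>x::real. finite {g. nrm g \<le> x}) \<and>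
     (\<forall>g. \<exists>!M::'a multiset. (\<forall>p\<in>#M. arith_irred p) \<and> prod_mset M = g)"

definition count_G :: "('a \<Rightarrow> real) \<Rightarrow> real \<Rightarrow> real" where
  "count_G nrm x = real (card {g. nrm g \<le> x})"

text \<open>Zeta function for Re s > 1.\<close>
definition zeta_G :: "('a \<Rightarrow> real) \<Rightarrow> complex \<Rightarrow> complex" where
  "zeta_G nrm s = (\<Sum>\<^sub>\<infinity>g. complex_of_real (nrm g) powr (- s))"

definition zeta_G_line :: "('a \<Rightarrow> real) \<Rightarrow> real \<Rightarrow> complex" where
  "zeta_G_line nrm t = Lim (at_right 1) (\<lambda>\<sigma>. zeta_G nrm (Complex \<sigma> t))"

end

theory Submission imports Defs "HOL-Complex_Analysis.Cauchy_Integral_Theorem" begin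

lemma cpowr_meas[measurable]: "(\<lambda>x::real. complex_of_real x powr s) \<in> borel_measurable borel"
  unfolding powr_def by measurable

lemma norm_cpowr: "0 < x \<Longrightarrow> norm (complex_of_real x powr s) = x powr Re s"
  by (simp add: norm_powr_real_powr)

lemma cpowr_add: "0 < x \<Longrightarrow> complex_of_real x powr (a + b) = complex_of_real x powr a * complex_of_real x powr b"
  by (simp add: powr_def exp_add distrib_right)

lemma cpowr_deriv:
  assumes "0 < x"
  shows "((\<lambda>y. complex_of_real y powr s) has_vector_derivative (s * complex_of_real x powr (s - 1))) (at x within S)"
proof -
  have "complex_of_real x \<notin> \<real>\<^sub>\<le>\<^sub>0" using assms by (auto simp: nonpos_Reals_def)
  from has_field_derivative_powr[OF this, of s] show ?thesis
    by (rule has_vector_derivative_real_field)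
qed

lemma cpowr_cont: "0 < x \<Longrightarrow> isCont (\<lambda>y. complex_of_real y powr s) x"
  using cpowr_deriv[of x s UNIV] has_vector_derivative_continuous by blast

lemma cpowr_cont_on: "A \<subseteq> {0<..} \<Longrightarrow> continuous_on A (\<lambda>y. complex_of_real y powr s)"
  by (intro continuous_at_imp_continuous_on ballI cpowr_cont) auto

lemma cpowr_real: "0 < x \<Longrightarrow> complex_of_real x powr complex_of_real r = complex_of_real (x powr r)"
  by (simp add: powr_of_real)

lemma FTC_cpowr:
  assumes "0 < a" "a \<le> b"
  shows "(LINT x:{a..b}|lborel. s * complex_of_real x powr (- s - 1)) =
           complex_of_real a powr (- s) - complex_of_real b powr (- s)"
proof -
  define F where "F = (\<lambda>y. - (complex_of_real y powr (- s)))"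
  have "(LINT x:{a..b}|lborel. s * complex_of_real x powr (- s - 1)) =
        F b - F a"
    unfolding set_lebesgue_integral_def
  proof (rule integral_FTC_atLeastAtMost[OF assms(2)])
    fix x assume "a \<le> x" "x \<le> b"
    then have "0 < x" using assms by auto
    from has_vector_derivative_minus[OF cpowr_deriv[OF this, of "-s" "{a..b}"]]
    show "(F has_vector_derivative s * complex_of_real x powr (- s - 1)) (at x within {a..b})"
      by (simp add: F_def)
  next
    show "continuous_on {a..b} (\<lambda>x. s * complex_of_real x powr (- s - 1))"
      using assms by (intro continuous_intros cpowr_cont_on) auto
  qed
  then show ?thesis by (simp add: F_def)
qed


lemma int_bdd:
  fixes g :: "real \<Rightarrow> 'b::{banach, second_countable_topology}"
  assumes "g \<in> borel_measurable borel" "\<And>x. X \<le> x \<Longrightarrow> x \<le> Y \<Longrightarrow> norm (g x) \<le> B"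
  shows "set_integrable lborel {X..Y} g"
  unfolding set_integrable_def
  by (rule integrableI_bounded_set_indicator[where B=B]) (use assms in \<open>auto simp: emeasure_lborel_Icc_eq\<close>)

lemma powr_le_sum: "0 < (X::real) \<Longrightarrow> X \<le> x \<Longrightarrow> x \<le> Y \<Longrightarrow> x powr r \<le> X powr r + Y powr r"
proof (cases "r \<ge> 0")
  case True
  assume "0 < X" "X \<le> x" "x \<le> Y"
  then have "x powr r \<le> Y powr r" using True by (intro powr_mono2) auto
  then show ?thesis by (smt (verit) powr_ge_zero)
next
  case False
  assume "0 < X" "X \<le> x" "x \<le> Y"
  then have "x powr r \<le> X powr r" using False by (intro powr_mono2') auto
  then show ?thesis by (smt (verit) powr_ge_zero)
qed

lemma FTC_inv:
  fixes a b :: real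
  assumes "0 < a" "a \<le> b"
  shows "(LINT x:{a..b}|lborel. 1 / x) = ln b - ln a"
  unfolding set_lebesgue_integral_def
proof (rule integral_FTC_atLeastAtMost[OF assms(2)])
  fix x assume "a \<le> x" "x \<le> b"
  then have "0 < x" using assms by auto
  then show "(ln has_vector_derivative 1 / x) (at x within {a..b})"
    by (auto intro!: derivative_eq_intros simp: has_real_derivative_iff_has_vector_derivative[symmetric])
next
  show "continuous_on {a..b} (\<lambda>x. 1 / x :: real)"
    using assms by (intro continuous_intros) auto
qed

lemma tail_weight:
  fixes \<gamma> X :: real
  assumes "1 < \<gamma>" "1 < X"
  shows "set_integrable lborel {X..} (\<lambda>x. 1 / (x * ln x powr \<gamma>))"
    and "(LINT x:{X..}|lborel. 1 / (x * ln x powr \<gamma>)) = ln X powr (1 - \<gamma>) / (\<gamma> - 1)"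
proof -
  define f where "f = (\<lambda>x::real. 1 / (x * ln x powr \<gamma>))"
  define F where "F = (\<lambda>x::real. - (ln x powr (1 - \<gamma>)) / (\<gamma> - 1))"
  have fm: "f \<in> borel_measurable borel" unfolding f_def by measurable
  have D: "DERIV F x :> f x" if "X \<le> x" for x
  proof -
    have x: "1 < x" "0 < ln x" using that assms by auto
    have "DERIV F x :> - ((1 - \<gamma>) * ln x powr (1 - \<gamma> - 1) * (1 / x)) / (\<gamma> - 1)"
      unfolding F_def using x assms by (auto intro!: derivative_eq_intros)
    also have "- ((1 - \<gamma>) * ln x powr (1 - \<gamma> - 1) * (1 / x)) / (\<gamma> - 1) = f x"
      using x assms unfolding f_def by (simp add: powr_minus field_simps powr_diff)
    finally show ?thesis .
  qed
  have nn: "0 \<le> f x" if "X \<le> x" for x unfolding f_def using that assms by auto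
  have lim: "(F \<longlongrightarrow> 0) at_top"
  proof -
    have "((\<lambda>x. ln x powr (1 - \<gamma>)) \<longlongrightarrow> 0) at_top"
      using assms by (intro tendsto_neg_powr ln_at_top) auto
    then have "((\<lambda>x. - (ln x powr (1 - \<gamma>)) / (\<gamma> - 1)) \<longlongrightarrow> - 0 / (\<gamma> - 1)) at_top"
      using assms by (intro tendsto_intros) auto
    then show ?thesis unfolding F_def by simp
  qed
  have I: "(\<integral>\<^sup>+x. ennreal (f x) * indicator {X..} x \<partial>lborel) = 0 - F X"
    by (rule nn_integral_FTC_atLeast[OF fm D nn lim])
  have val: "0 - F X = ln X powr (1 - \<gamma>) / (\<gamma> - 1)" unfolding F_def by simp
  have eqn: "(\<integral>\<^sup>+x. ennreal (indicator {X..} x *\<^sub>R f x) \<partial>lborel) = (\<integral>\<^sup>+x. ennreal (f x) * indicator {X..} x \<partial>lborel)"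
    by (intro nn_integral_cong) (auto simp: indicator_def)
  have m2: "(\<lambda>x. indicator {X..} x *\<^sub>R f x) \<in> borel_measurable lborel" using fm by simp
  have nn2: "AE x in lborel. 0 \<le> indicator {X..} x *\<^sub>R f x" using nn by (auto simp: indicator_def)
  show si: "set_integrable lborel {X..} (\<lambda>x. 1 / (x * ln x powr \<gamma>))"
    unfolding set_integrable_def f_def[symmetric]
    by (rule integrableI_nonneg[OF m2 nn2]) (use eqn I in simp)
  show "(LINT x:{X..}|lborel. 1 / (x * ln x powr \<gamma>)) = ln X powr (1 - \<gamma>) / (\<gamma> - 1)"
    unfolding set_lebesgue_integral_def f_def[symmetric]
    using val assms eqn I by (subst integral_eq_nn_integral[OF m2 nn2]) simp
qed

lemma cpowr_tendsto:
  assumes "0 < a" "(w \<longlongrightarrow> w0) F"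
  shows "((\<lambda>z. complex_of_real a powr w z) \<longlongrightarrow> complex_of_real a powr w0) F"
  using assms unfolding powr_def by (auto intro!: tendsto_intros)

lemma FTC_rpowr:
  fixes a b r :: real
  assumes "0 < a" "a \<le> b" "r \<noteq> -1"
  shows "(LINT x:{a..b}|lborel. x powr r) = (b powr (r + 1) - a powr (r + 1)) / (r + 1)"
proof -
  define F where "F = (\<lambda>x::real. x powr (r + 1) / (r + 1))"
  have "(LINT x:{a..b}|lborel. x powr r) = F b - F a"
    unfolding set_lebesgue_integral_def
  proof (rule integral_FTC_atLeastAtMost[OF assms(2)])
    fix x assume "a \<le> x" "x \<le> b"
    then have x: "0 < x" using assms by auto
    have "(F has_real_derivative (r + 1) * x powr (r + 1 - 1) / (r + 1)) (at x)"
      unfolding F_def using x by (auto intro!: derivative_eq_intros)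
    moreover have "(r + 1) * x powr (r + 1 - 1) / (r + 1) = x powr r" using assms(3) by simp
    ultimately show "(F has_vector_derivative x powr r) (at x within {a..b})"
      by (simp add: has_real_derivative_iff_has_vector_derivative[symmetric] has_field_derivative_at_within)
  next
    show "continuous_on {a..b} (\<lambda>x. x powr r)"
      using assms by (intro continuous_intros) auto
  qed
  then show ?thesis unfolding F_def by (simp add: diff_divide_distrib)
qed

locale asg =
  fixes nrm :: "'a \<Rightarrow> real"
  assumes ge1: "\<And>g. nrm g \<ge> 1" and fin: "\<And>x. finite {g. nrm g \<le> x}"
begin

lemma NN_mono: "x \<le> y \<Longrightarrow> count_G nrm x \<le> count_G nrm y"
  unfolding count_G_def by (intro of_nat_mono card_mono fin) auto

lemma NN_small: "x < 1 \<Longrightarrow> count_G nrm x = 0"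
proof -
  assume "x < 1"
  then have "{g. nrm g \<le> x} = {}" using ge1 by (auto intro: antisym) (meson le_less_trans linorder_not_le ge1)
  then show ?thesis unfolding count_G_def by simp
qed

lemma NN_nonneg: "count_G nrm x \<ge> 0"
  unfolding count_G_def by simp

lemma NN_meas[measurable]: "count_G nrm \<in> borel_measurable borel"
  by (rule borel_measurable_mono) (auto simp: mono_def NN_mono)

lemma NN_split:
  assumes "X \<le> x"
  shows "count_G nrm x = count_G nrm X + real (card {g. X < nrm g \<and> nrm g \<le> x})"
proof -
  have "{g. nrm g \<le> x} = {g. nrm g \<le> X} \<union> {g. X < nrm g \<and> nrm g \<le> x}" using assms by auto
  moreover have "finite {g. X < nrm g \<and> nrm g \<le> x}" by (rule finite_subset[OF _ fin[of x]]) auto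
  ultimately have "card {g. nrm g \<le> x} = card {g. nrm g \<le> X} + card {g. X < nrm g \<and> nrm g \<le> x}"
    using fin[of X] by (simp add: card_Un_disjoint disjoint_iff)
  then show ?thesis unfolding count_G_def by simp
qed

lemma abel:
  assumes "0 < X" "X \<le> Y"
  shows "(\<Sum>g\<in>{g. X < nrm g \<and> nrm g \<le> Y}. complex_of_real (nrm g) powr (- s)) =
     complex_of_real (count_G nrm Y) * complex_of_real Y powr (- s)
   - complex_of_real (count_G nrm X) * complex_of_real X powr (- s)
   + (LINT x:{X..Y}|lborel. complex_of_real (count_G nrm x) * (s * complex_of_real x powr (- s - 1)))"
proof -
  define S where "S = {g. X < nrm g \<and> nrm g \<le> Y}"
  define f where "f = (\<lambda>x::real. s * complex_of_real x powr (- s - 1))"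
  have finS: "finite S" unfolding S_def by (rule finite_subset[OF _ fin[of Y]]) auto
  have intf: "set_integrable lborel {a..b} f" if "0 < a" for a b
    unfolding f_def using that by (intro borel_integrable_atLeastAtMost' continuous_intros cpowr_cont_on) auto
  have eq1: "complex_of_real (nrm g) powr (- s) = complex_of_real Y powr (- s) + (LINT x:{nrm g..Y}|lborel. f x)"
    if "g \<in> S" for g
    using FTC_cpowr[of "nrm g" Y s] that assms unfolding S_def f_def by auto
  have "(\<Sum>g\<in>S. complex_of_real (nrm g) powr (- s)) =
        (\<Sum>g\<in>S. complex_of_real Y powr (- s)) + (\<Sum>g\<in>S. (LINT x:{nrm g..Y}|lborel. f x))"
    by (simp add: eq1 sum.distrib)
  also have "(\<Sum>g\<in>S. (LINT x:{nrm g..Y}|lborel. f x)) =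
      integral\<^sup>L lborel (\<lambda>x. \<Sum>g\<in>S. indicator {nrm g..Y} x *\<^sub>R f x)"
    unfolding set_lebesgue_integral_def
    by (subst Bochner_Integration.integral_sum) (use intf ge1 in \<open>auto simp: set_integrable_def intro: less_le_trans[OF zero_less_one]\<close>)
  finally have A: "(\<Sum>g\<in>S. complex_of_real (nrm g) powr (- s)) =
      of_nat (card S) * complex_of_real Y powr (- s) + integral\<^sup>L lborel (\<lambda>x. \<Sum>g\<in>S. indicator {nrm g..Y} x *\<^sub>R f x)"
    by simp
  have pw: "(\<Sum>g\<in>S. indicator {nrm g..Y} x *\<^sub>R f x) =
      indicator {X..Y} x *\<^sub>R (complex_of_real (count_G nrm x - count_G nrm X) * f x)" for x
  proof (cases "X \<le> x \<and> x \<le> Y")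
    case True
    have "(\<Sum>g\<in>S. indicator {nrm g..Y} x *\<^sub>R f x) = (\<Sum>g\<in>S. (indicator {nrm g..Y} x :: real)) *\<^sub>R f x"
      by (simp add: scaleR_sum_left)
    also have "(\<Sum>g\<in>S. (indicator {nrm g..Y} x :: real)) = real (card {g\<in>S. nrm g \<le> x})"
      using True finS by (simp add: indicator_def sum.If_cases[OF finS] Int_def)
    also have "{g\<in>S. nrm g \<le> x} = {g. X < nrm g \<and> nrm g \<le> x}" using True unfolding S_def by auto
    finally show ?thesis using True NN_split[of X x] by (simp add: scaleR_conv_of_real)
  next
    case False
    then have "indicator {nrm g..Y} x = (0::real)" if "g \<in> S" for g
      using that unfolding S_def by (auto simp: indicator_def)
    then have "(\<Sum>g\<in>S. indicator {nrm g..Y} x *\<^sub>R f x) = 0" by (intro sum.neutral) simp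
    moreover have "indicator {X..Y} x = (0::real)" using False by (simp add: indicator_def)
    ultimately show ?thesis by simp
  qed
  have int_diff: "integrable lborel (\<lambda>x. indicator {X..Y} x *\<^sub>R (complex_of_real (count_G nrm x - count_G nrm X) * f x))"
    unfolding pw[symmetric]
    by (rule Bochner_Integration.integrable_sum) (use intf ge1 in \<open>auto simp: set_integrable_def intro: less_le_trans[OF zero_less_one]\<close>)
  define c where "c = complex_of_real (count_G nrm X)"
  have cX: "(\<lambda>x. indicator {X..Y} x *\<^sub>R (c * f x)) = (\<lambda>x. c * (indicator {X..Y} x *\<^sub>R f x))"
    by (simp add: scaleR_conv_of_real mult_ac)
  have intf0: "integrable lborel (\<lambda>x. indicator {X..Y} x *\<^sub>R f x)"
    using intf[OF assms(1), of Y] unfolding set_integrable_def .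
  have intX: "integrable lborel (\<lambda>x. indicator {X..Y} x *\<^sub>R (c * f x))"
    unfolding cX by (rule integrable_mult_right[OF intf0])
  have FX: "integral\<^sup>L lborel (\<lambda>x. indicator {X..Y} x *\<^sub>R f x) = complex_of_real X powr (- s) - complex_of_real Y powr (- s)"
    using FTC_cpowr[OF assms, of s] unfolding f_def set_lebesgue_integral_def .
  have intXv: "integral\<^sup>L lborel (\<lambda>x. indicator {X..Y} x *\<^sub>R (c * f x)) = c * (complex_of_real X powr (- s) - complex_of_real Y powr (- s))"
    unfolding cX FX[symmetric] by (rule integral_mult_right_zero)
  have split: "(\<lambda>x. indicator {X..Y} x *\<^sub>R (complex_of_real (count_G nrm x - count_G nrm X) * f x)) =
     (\<lambda>x. indicator {X..Y} x *\<^sub>R (complex_of_real (count_G nrm x) * f x) - indicator {X..Y} x *\<^sub>R (c * f x))"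
    by (simp add: c_def algebra_simps)
  have intN: "integrable lborel (\<lambda>x. indicator {X..Y} x *\<^sub>R (complex_of_real (count_G nrm x) * f x))"
  proof -
    have "integrable lborel (\<lambda>x. indicator {X..Y} x *\<^sub>R (complex_of_real (count_G nrm x - count_G nrm X) * f x)
        + indicator {X..Y} x *\<^sub>R (c * f x))"
      by (rule Bochner_Integration.integrable_add[OF int_diff intX])
    then show ?thesis by (simp add: c_def algebra_simps)
  qed
  have B: "integral\<^sup>L lborel (\<lambda>x. \<Sum>g\<in>S. indicator {nrm g..Y} x *\<^sub>R f x) =
      integral\<^sup>L lborel (\<lambda>x. indicator {X..Y} x *\<^sub>R (complex_of_real (count_G nrm x) * f x))
      - c * (complex_of_real X powr (- s) - complex_of_real Y powr (- s))"
    unfolding pw split by (subst Bochner_Integration.integral_diff[OF intN intX]) (simp add: intXv)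
  have cardS: "real (card S) = count_G nrm Y - count_G nrm X"
    using NN_split[OF assms(2)] unfolding S_def by simp
  have cardS': "(of_nat (card S) :: complex) = complex_of_real (count_G nrm Y) - c"
    unfolding c_def using cardS by (metis of_real_diff of_real_of_nat_eq)
  show ?thesis
    unfolding S_def[symmetric] A B cardS' set_lebesgue_integral_def c_def[symmetric]
    by (simp add: f_def algebra_simps)
qed

end

locale asg2 = asg nrm for nrm :: "'a \<Rightarrow> real" +
  fixes A C \<gamma> x0 :: real
  assumes gam: "1 < \<gamma>" and x0: "3 \<le> x0" and Cnn: "0 \<le> C"
    and bnd: "\<And>x. x0 \<le> x \<Longrightarrow> \<bar>count_G nrm x - A * x\<bar> \<le> C * x / ln x powr \<gamma>"
begin

definition C1 where "C1 = \<bar>A\<bar> + C + count_G nrm x0"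
definition RR where "RR x = count_G nrm x - A * x"

lemma C1_nn: "0 \<le> C1"
  unfolding C1_def using Cnn NN_nonneg[of x0] by simp

lemma ln_ge1: "x0 \<le> x \<Longrightarrow> 1 \<le> ln x"
proof -
  assume "x0 \<le> x"
  then have "exp 1 \<le> x" using x0 exp_le by linarith
  moreover have "0 < x" using \<open>exp 1 \<le> x\<close> by (smt (verit) exp_gt_zero)
  ultimately show "1 \<le> ln x" using ln_ge_iff[of x 1] by auto
qed

lemma lnpow_ge1: "x0 \<le> x \<Longrightarrow> 1 \<le> ln x powr \<gamma>"
  by (intro ge_one_powr_ge_zero ln_ge1) (use gam in auto)

lemma NN_le: assumes "0 < x" shows "count_G nrm x \<le> C1 * x"
proof -
  consider "x < 1" | "1 \<le> x" "x \<le> x0" | "x0 \<le> x" by linarith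
  then show ?thesis
  proof cases
    case 1 then show ?thesis using NN_small C1_nn assms by simp
  next
    case 2
    have "count_G nrm x \<le> count_G nrm x0" using NN_mono 2 by simp
    also have "\<dots> \<le> count_G nrm x0 * x" using 2 NN_nonneg[of x0] by (simp add: mult_le_cancel_left1)
    also have "\<dots> \<le> C1 * x" unfolding C1_def using 2 Cnn by (intro mult_right_mono) auto
    finally show ?thesis .
  next
    case 3
    have l: "1 \<le> ln x powr \<gamma>" using lnpow_ge1 3 .
    have x: "0 < x" using 3 x0 by simp
    have "C * x / ln x powr \<gamma> \<le> C * x" using l x Cnn
      by (simp add: divide_le_eq mult_le_cancel_left1) (smt (verit) mult_nonneg_nonneg mult_le_cancel_left1)
    then have "count_G nrm x \<le> A * x + C * x" using bnd[OF 3] by linarith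
    also have "\<dots> \<le> \<bar>A\<bar> * x + C * x" using x by (intro add_right_mono mult_right_mono) auto
    also have "\<dots> \<le> C1 * x" unfolding C1_def using x NN_nonneg[of x0] by (simp add: algebra_simps)
    finally show ?thesis .
  qed
qed

lemma RR_meas[measurable]: "RR \<in> borel_measurable borel"
  unfolding RR_def by measurable

lemma tail_bound:
  assumes "x0 \<le> x" "1 \<le> Re s"
  shows "norm (complex_of_real (RR x) * (s * complex_of_real x powr (- s - 1))) \<le> norm s * C * (1 / (x * ln x powr \<gamma>))"
proof -
  have x: "1 \<le> x" "0 < x" using assms x0 by auto
  have l: "0 < ln x powr \<gamma>" using lnpow_ge1[OF assms(1)] by linarith
  have p: "norm (complex_of_real x powr (- s - 1)) \<le> x powr (-2)"
    using x assms by (simp add: norm_cpowr powr_mono)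
  have "norm (complex_of_real (RR x) * (s * complex_of_real x powr (- s - 1))) =
      \<bar>RR x\<bar> * norm s * norm (complex_of_real x powr (- s - 1))"
    by (simp add: norm_mult)
  also have "\<dots> \<le> (C * x / ln x powr \<gamma>) * norm s * x powr (-2)"
    using bnd[OF assms(1)] p l x Cnn unfolding RR_def
    by (intro mult_mono) auto
  also have "(C * x / ln x powr \<gamma>) * norm s * x powr (-2) = norm s * C * (1 / (x * ln x powr \<gamma>))"
    using x l by (simp add: powr_minus power2_eq_square field_simps)
  finally show ?thesis .
qed

lemma tail_int:
  assumes "x0 \<le> X" "1 \<le> Re s"
  shows "set_integrable lborel {X..} (\<lambda>x. complex_of_real (RR x) * (s * complex_of_real x powr (- s - 1)))"
    and "norm (LINT x:{X..}|lborel. complex_of_real (RR x) * (s * complex_of_real x powr (- s - 1)))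
           \<le> norm s * C * (ln X powr (1 - \<gamma>) / (\<gamma> - 1))"
proof -
  have X1: "1 < X" using assms x0 by simp
  have w: "set_integrable lborel {X..} (\<lambda>x. norm s * C * (1 / (x * ln x powr \<gamma>)))"
    using tail_weight(1)[OF gam X1] by (intro set_integrable_mult_right)
  show si: "set_integrable lborel {X..} (\<lambda>x. complex_of_real (RR x) * (s * complex_of_real x powr (- s - 1)))"
  proof (rule set_integrable_bound[OF w])
    show "set_borel_measurable lborel {X..} (\<lambda>x. complex_of_real (RR x) * (s * complex_of_real x powr (- s - 1)))"
      unfolding set_borel_measurable_def by measurable
    show "AE x in lborel. x \<in> {X..} \<longrightarrow> norm (complex_of_real (RR x) * (s * complex_of_real x powr (- s - 1)))
        \<le> norm (norm s * C * (1 / (x * ln x powr \<gamma>)))"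
    proof (intro AE_I2 impI)
      fix x assume "x \<in> {X..}"
      then have "x0 \<le> x" using assms by auto
      have "0 \<le> norm s * C" using Cnn by simp
      moreover have "0 < x * ln x powr \<gamma>" using lnpow_ge1[OF \<open>x0 \<le> x\<close>] \<open>x0 \<le> x\<close> x0 by simp
      moreover note tail_bound[OF \<open>x0 \<le> x\<close> assms(2)]
      ultimately show "norm (complex_of_real (RR x) * (s * complex_of_real x powr (- s - 1)))
        \<le> norm (norm s * C * (1 / (x * ln x powr \<gamma>)))" by simp
    qed
  qed
  have "norm (LINT x:{X..}|lborel. complex_of_real (RR x) * (s * complex_of_real x powr (- s - 1)))
      \<le> (LINT x:{X..}|lborel. norm (complex_of_real (RR x) * (s * complex_of_real x powr (- s - 1))))"
    by (rule set_integral_norm_bound[OF si])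
  also have "\<dots> \<le> (LINT x:{X..}|lborel. norm s * C * (1 / (x * ln x powr \<gamma>)))"
  proof (rule set_integral_mono)
    show "set_integrable lborel {X..} (\<lambda>x. norm (complex_of_real (RR x) * (s * complex_of_real x powr (- s - 1))))"
      using si by (rule set_integrable_norm)
  qed (use w tail_bound assms in auto)
  also have "\<dots> = norm s * C * (ln X powr (1 - \<gamma>) / (\<gamma> - 1))"
    using tail_weight(2)[OF gam X1] by (simp only: set_integral_mult_right)
  finally show "norm (LINT x:{X..}|lborel. complex_of_real (RR x) * (s * complex_of_real x powr (- s - 1)))
           \<le> norm s * C * (ln X powr (1 - \<gamma>) / (\<gamma> - 1))" .
qed

lemma cpowr_bnd: "0 < X \<Longrightarrow> X \<le> x \<Longrightarrow> x \<le> Y \<Longrightarrow> norm (complex_of_real x powr w) \<le> X powr Re w + Y powr Re w"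
  using powr_le_sum[of X x Y "Re w"] by (simp add: norm_cpowr)

lemma int_RR:
  assumes "0 < X"
  shows "set_integrable lborel {X..Y} (\<lambda>x. complex_of_real (RR x) * (s * complex_of_real x powr (- s - 1)))"
proof (rule int_bdd)
  show "(\<lambda>x. complex_of_real (RR x) * (s * complex_of_real x powr (- s - 1))) \<in> borel_measurable borel"
    by measurable
  fix x assume x: "X \<le> x" "x \<le> Y"
  have x0': "0 < x" using x assms by linarith
  have "\<bar>RR x\<bar> \<le> \<bar>count_G nrm x\<bar> + \<bar>A * x\<bar>" unfolding RR_def by (rule abs_triangle_ineq4)
  also have "\<bar>count_G nrm x\<bar> \<le> count_G nrm Y" using NN_mono[OF x(2)] NN_nonneg[of x] by linarith
  also have "\<bar>A * x\<bar> \<le> \<bar>A\<bar> * Y" using x x0' by (simp add: abs_mult mult_left_mono)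
  finally have "\<bar>RR x\<bar> \<le> count_G nrm Y + \<bar>A\<bar> * Y" by simp
  moreover have "norm (complex_of_real x powr (- s - 1)) \<le> X powr Re (- s - 1) + Y powr Re (- s - 1)"
    using cpowr_bnd[OF assms x] .
  ultimately show "norm (complex_of_real (RR x) * (s * complex_of_real x powr (- s - 1))) \<le>
     (count_G nrm Y + \<bar>A\<bar> * Y) * (norm s * (X powr Re (- s - 1) + Y powr Re (- s - 1)))"
    by (simp add: norm_mult mult_mono mult_left_mono)
qed

lemma star:
  fixes s :: complex
  assumes "0 < X" "X \<le> Y" "s \<noteq> 1"
  shows "(\<Sum>g\<in>{g. X < nrm g \<and> nrm g \<le> Y}. complex_of_real (nrm g) powr (- s)) =
     complex_of_real (count_G nrm Y) * complex_of_real Y powr (- s)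
   - complex_of_real (count_G nrm X) * complex_of_real X powr (- s)
   + complex_of_real A * s * (complex_of_real X powr (1 - s) - complex_of_real Y powr (1 - s)) / (s - 1)
   + (LINT x:{X..Y}|lborel. complex_of_real (RR x) * (s * complex_of_real x powr (- s - 1)))"
proof -
  have pw: "complex_of_real (count_G nrm x) * (s * complex_of_real x powr (- s - 1)) =
     complex_of_real (RR x) * (s * complex_of_real x powr (- s - 1)) +
     (complex_of_real A * s / (s - 1)) * ((s - 1) * complex_of_real x powr (- (s - 1) - 1))" if "x \<in> {X..Y}" for x
  proof -
    have x: "0 < x" using that assms by auto
    have "complex_of_real x powr (- s) = complex_of_real x powr (1 + (- s - 1))" by simp
    also have "\<dots> = complex_of_real x * complex_of_real x powr (- s - 1)"
      using x by (simp only: cpowr_add) (simp add: powr_one)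
    finally have e: "complex_of_real x powr (- s) = complex_of_real x * complex_of_real x powr (- s - 1)" .
    have m: "- (s - 1) - 1 = - s" by simp
    have d: "(complex_of_real A * s / (s - 1)) * ((s - 1) * z) = complex_of_real A * s * z" for z :: complex
      using assms(3) by (simp add: divide_simps)
    have r: "complex_of_real (RR x) = complex_of_real (count_G nrm x) - complex_of_real A * complex_of_real x"
      unfolding RR_def by simp
    show ?thesis unfolding m d r e by (simp add: algebra_simps)
  qed
  have i2: "set_integrable lborel {X..Y} (\<lambda>x. (s - 1) * complex_of_real x powr (- (s - 1) - 1))"
    using assms by (intro borel_integrable_atLeastAtMost' continuous_intros cpowr_cont_on) auto
  have "(LINT x:{X..Y}|lborel. complex_of_real (count_G nrm x) * (s * complex_of_real x powr (- s - 1))) =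
     (LINT x:{X..Y}|lborel. complex_of_real (RR x) * (s * complex_of_real x powr (- s - 1)) +
     (complex_of_real A * s / (s - 1)) * ((s - 1) * complex_of_real x powr (- (s - 1) - 1)))"
    by (rule set_lebesgue_integral_cong) (use pw in auto)
  also have "\<dots> = (LINT x:{X..Y}|lborel. complex_of_real (RR x) * (s * complex_of_real x powr (- s - 1))) +
     (complex_of_real A * s / (s - 1)) * (LINT x:{X..Y}|lborel. (s - 1) * complex_of_real x powr (- (s - 1) - 1))"
    by (subst set_integral_add[OF int_RR[OF assms(1)] set_integrable_mult_right[OF i2]]) (simp only: set_integral_mult_right)
  also have "(LINT x:{X..Y}|lborel. (s - 1) * complex_of_real x powr (- (s - 1) - 1)) =
      complex_of_real X powr (1 - s) - complex_of_real Y powr (1 - s)"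
    using FTC_cpowr[OF assms(1,2), of "s - 1"] by simp
  finally have I: "(LINT x:{X..Y}|lborel. complex_of_real (count_G nrm x) * (s * complex_of_real x powr (- s - 1))) =
     (LINT x:{X..Y}|lborel. complex_of_real (RR x) * (s * complex_of_real x powr (- s - 1))) +
     (complex_of_real A * s / (s - 1)) * (complex_of_real X powr (1 - s) - complex_of_real Y powr (1 - s))" .
  have s1: "s - 1 \<noteq> 0" using assms(3) by simp
  show ?thesis unfolding abel[OF assms(1,2), of s] I using s1 by (simp add: field_simps)
qed

lemma int_NN:
  assumes "0 < X"
  shows "set_integrable lborel {X..Y} (\<lambda>x. complex_of_real (count_G nrm x) * (s * complex_of_real x powr (- s - 1)))"
proof (rule int_bdd)
  show "(\<lambda>x. complex_of_real (count_G nrm x) * (s * complex_of_real x powr (- s - 1))) \<in> borel_measurable borel"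
    by measurable
  fix x assume x: "X \<le> x" "x \<le> Y"
  have "\<bar>count_G nrm x\<bar> \<le> count_G nrm Y" using NN_mono[OF x(2)] NN_nonneg[of x] by linarith
  moreover have "norm (complex_of_real x powr (- s - 1)) \<le> X powr Re (- s - 1) + Y powr Re (- s - 1)"
    using cpowr_bnd[OF assms x] .
  ultimately show "norm (complex_of_real (count_G nrm x) * (s * complex_of_real x powr (- s - 1))) \<le>
     (count_G nrm Y) * (norm s * (X powr Re (- s - 1) + Y powr Re (- s - 1)))"
    by (simp add: norm_mult mult_mono mult_left_mono)
qed

lemma psum_bound:
  assumes "1 \<le> \<sigma>" "1 \<le> Y"
  shows "(\<Sum>g\<in>{g. 1 < nrm g \<and> nrm g \<le> Y}. nrm g powr (- \<sigma>)) \<le>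
           C1 + count_G nrm 1 + C1 * \<sigma> * (LINT x:{1..Y}|lborel. x powr (- \<sigma>))"
proof -
  define s where "s = complex_of_real \<sigma>"
  define S where "S = {g. 1 < nrm g \<and> nrm g \<le> Y}"
  have eqc: "complex_of_real (\<Sum>g\<in>S. nrm g powr (- \<sigma>)) = (\<Sum>g\<in>S. complex_of_real (nrm g) powr (- s))"
    unfolding s_def of_real_sum using ge1
    by (intro sum.cong refl) (simp add: cpowr_real[symmetric] less_le_trans[OF zero_less_one])
  have nn: "0 \<le> (\<Sum>g\<in>S. nrm g powr (- \<sigma>))" by (intro sum_nonneg) simp
  have ab: "(\<Sum>g\<in>S. complex_of_real (nrm g) powr (- s)) = complex_of_real (count_G nrm Y) * complex_of_real Y powr (- s)
   - complex_of_real (count_G nrm 1)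
   + (LINT x:{1..Y}|lborel. complex_of_real (count_G nrm x) * (s * complex_of_real x powr (- s - 1)))"
    unfolding S_def using abel[of 1 Y s] assms by simp
  have "(\<Sum>g\<in>S. nrm g powr (- \<sigma>)) = norm (complex_of_real (\<Sum>g\<in>S. nrm g powr (- \<sigma>)))"
    using nn by (metis norm_of_real abs_of_nonneg)
  also have "\<dots> = norm (complex_of_real (count_G nrm Y) * complex_of_real Y powr (- s)
   - complex_of_real (count_G nrm 1)
   + (LINT x:{1..Y}|lborel. complex_of_real (count_G nrm x) * (s * complex_of_real x powr (- s - 1))))"
    by (simp only: eqc ab)
  also have "\<dots> \<le> norm (complex_of_real (count_G nrm Y) * complex_of_real Y powr (- s))
     + norm (complex_of_real (count_G nrm 1))
     + norm (LINT x:{1..Y}|lborel. complex_of_real (count_G nrm x) * (s * complex_of_real x powr (- s - 1)))"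
    by (intro order.trans[OF norm_triangle_ineq] add_right_mono norm_triangle_ineq4)
  also have "norm (complex_of_real (count_G nrm Y) * complex_of_real Y powr (- s)) \<le> C1"
  proof -
    have "norm (complex_of_real (count_G nrm Y) * complex_of_real Y powr (- s)) = count_G nrm Y * Y powr (- \<sigma>)"
      using assms NN_nonneg[of Y] by (simp add: norm_mult norm_cpowr s_def)
    also have "\<dots> \<le> C1 * Y * Y powr (- \<sigma>)" using NN_le[of Y] assms by (intro mult_right_mono) auto
    also have "C1 * Y * Y powr (- \<sigma>) = C1 * Y powr (1 - \<sigma>)" using assms by (simp add: powr_diff powr_minus field_simps)
    also have "\<dots> \<le> C1 * 1" using assms C1_nn powr_mono[of "1 - \<sigma>" 0 Y] by (intro mult_left_mono) auto
    finally show ?thesis by simp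
  qed
  also have "norm (complex_of_real (count_G nrm 1)) = count_G nrm 1"
    using NN_nonneg[of 1] by simp
  also have "norm (LINT x:{1..Y}|lborel. complex_of_real (count_G nrm x) * (s * complex_of_real x powr (- s - 1)))
     \<le> (LINT x:{1..Y}|lborel. norm (complex_of_real (count_G nrm x) * (s * complex_of_real x powr (- s - 1))))"
    by (rule set_integral_norm_bound[OF int_NN]) simp
  also have "\<dots> \<le> (LINT x:{1..Y}|lborel. C1 * \<sigma> * x powr (- \<sigma>))"
  proof (rule set_integral_mono)
    show "set_integrable lborel {1..Y} (\<lambda>x. norm (complex_of_real (count_G nrm x) * (s * complex_of_real x powr (- s - 1))))"
      by (rule set_integrable_norm[OF int_NN]) simp
    show "set_integrable lborel {1..Y} (\<lambda>x. C1 * \<sigma> * x powr (- \<sigma>))"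
      by (intro borel_integrable_atLeastAtMost' continuous_intros) auto
    fix x assume "x \<in> {1..Y}"
    then have x: "1 \<le> x" "0 < x" by auto
    have "norm (complex_of_real (count_G nrm x) * (s * complex_of_real x powr (- s - 1))) =
        count_G nrm x * (\<sigma> * x powr (- \<sigma> - 1))"
      using x NN_nonneg[of x] assms by (simp add: norm_mult norm_cpowr s_def)
    also have "\<dots> \<le> (C1 * x) * (\<sigma> * x powr (- \<sigma> - 1))"
      using NN_le[OF x(2)] assms by (intro mult_right_mono) auto
    also have "(C1 * x) * (\<sigma> * x powr (- \<sigma> - 1)) = C1 * \<sigma> * x powr (- \<sigma>)"
      using x by (simp add: powr_diff powr_minus field_simps)
    finally show "norm (complex_of_real (count_G nrm x) * (s * complex_of_real x powr (- s - 1))) \<le> C1 * \<sigma> * x powr (- \<sigma>)" .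
  qed
  also have "(LINT x:{1..Y}|lborel. C1 * \<sigma> * x powr (- \<sigma>)) = C1 * \<sigma> * (LINT x:{1..Y}|lborel. x powr (- \<sigma>))"
    by (simp only: set_integral_mult_right)
  finally show ?thesis unfolding S_def by simp
qed

lemma head_bound:
  assumes "1 \<le> \<sigma>" "1 \<le> Y"
  shows "(\<Sum>g\<in>{g. nrm g \<le> Y}. nrm g powr (- \<sigma>)) \<le>
           C1 + 2 * count_G nrm 1 + C1 * \<sigma> * (LINT x:{1..Y}|lborel. x powr (- \<sigma>))"
proof -
  have u: "{g. nrm g \<le> Y} = {g. nrm g \<le> 1} \<union> {g. 1 < nrm g \<and> nrm g \<le> Y}" using assms by auto
  have f2: "finite {g. 1 < nrm g \<and> nrm g \<le> Y}" by (rule finite_subset[OF _ fin[of Y]]) auto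
  have "(\<Sum>g\<in>{g. nrm g \<le> Y}. nrm g powr (- \<sigma>)) =
     (\<Sum>g\<in>{g. nrm g \<le> 1}. nrm g powr (- \<sigma>)) + (\<Sum>g\<in>{g. 1 < nrm g \<and> nrm g \<le> Y}. nrm g powr (- \<sigma>))"
    unfolding u by (rule sum.union_disjoint[OF fin f2]) auto
  also have "(\<Sum>g\<in>{g. nrm g \<le> 1}. nrm g powr (- \<sigma>)) = (\<Sum>g\<in>{g. nrm g \<le> 1}. 1)"
  proof (rule sum.cong)
    fix g assume "g \<in> {g. nrm g \<le> 1}"
    then have "nrm g = 1" using ge1[of g] by simp
    then show "nrm g powr (- \<sigma>) = 1" by simp
  qed simp
  also have "\<dots> = count_G nrm 1" unfolding count_G_def by simp
  finally show ?thesis using psum_bound[OF assms] by linarith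
qed

lemma int_powr_bound:
  fixes \<sigma> Y :: real
  assumes "1 < \<sigma>" "1 \<le> Y"
  shows "(LINT x:{1..Y}|lborel. x powr (- \<sigma>)) \<le> 1 / (\<sigma> - 1)"
proof -
  have "(LINT x:{1..Y}|lborel. x powr (- \<sigma>)) = (Y powr (- \<sigma> + 1) - 1 powr (- \<sigma> + 1)) / (- \<sigma> + 1)"
    using FTC_rpowr[of 1 Y "- \<sigma>"] assms by simp
  also have "\<dots> = (1 - Y powr (1 - \<sigma>)) / (\<sigma> - 1)"
    using assms by (simp add: field_simps)
  also have "\<dots> \<le> 1 / (\<sigma> - 1)" using assms by (intro divide_right_mono) auto
  finally show ?thesis .
qed

lemma int_inv_eq:
  fixes Y :: real
  assumes "1 \<le> Y"
  shows "(LINT x:{1..Y}|lborel. x powr (- 1)) = ln Y"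
proof -
  have "(LINT x:{1..Y}|lborel. x powr (- 1)) = (LINT x:{1..Y}|lborel. 1 / x)"
    by (rule set_lebesgue_integral_cong) (auto simp: powr_minus_divide)
  also have "\<dots> = ln Y" using FTC_inv[of 1 Y] assms by simp
  finally show ?thesis .
qed

lemma summ:
  assumes "1 < Re s"
  shows "(\<lambda>g. complex_of_real (nrm g) powr (- s)) summable_on UNIV"
proof (rule abs_summable_summable)
  define K where "K = C1 + 2 * count_G nrm 1 + C1 * Re s * (1 / (Re s - 1))"
  have nf: "norm (complex_of_real (nrm g) powr (- s)) = nrm g powr (- Re s)" for g
    using ge1[of g] by (simp add: norm_cpowr)
  show "(\<lambda>g. norm (complex_of_real (nrm g) powr (- s))) summable_on UNIV"
    unfolding nf
  proof (rule nonneg_bdd_above_summable_on)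
    show "bdd_above (sum (\<lambda>g. nrm g powr - Re s) ` {F. F \<subseteq> UNIV \<and> finite F})"
    proof (rule bdd_aboveI2)
      fix F :: "'a set" assume F: "F \<in> {F. F \<subseteq> UNIV \<and> finite F}"
      define Y where "Y = Max (insert 1 (nrm ` F))"
      have Y1: "1 \<le> Y" unfolding Y_def using F by simp
      have sub: "F \<subseteq> {g. nrm g \<le> Y}" unfolding Y_def using F by auto
      have "sum (\<lambda>g. nrm g powr - Re s) F \<le> (\<Sum>g\<in>{g. nrm g \<le> Y}. nrm g powr (- Re s))"
        by (rule sum_mono2[OF fin sub]) auto
      also have "\<dots> \<le> C1 + 2 * count_G nrm 1 + C1 * Re s * (LINT x:{1..Y}|lborel. x powr (- Re s))"
        using head_bound[OF _ Y1, of "Re s"] assms by simp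
      also have "\<dots> \<le> K" unfolding K_def using int_powr_bound[OF assms Y1] C1_nn assms
        by (intro add_left_mono mult_left_mono) auto
      finally show "sum (\<lambda>g. nrm g powr - Re s) F \<le> K" .
    qed
  qed simp
qed

definition ZZ :: "real \<Rightarrow> complex \<Rightarrow> complex" where
  "ZZ X s = (\<Sum>g\<in>{g. nrm g \<le> X}. complex_of_real (nrm g) powr (- s))
     - complex_of_real (count_G nrm X) * complex_of_real X powr (- s)
     + complex_of_real A * s * complex_of_real X powr (1 - s) / (s - 1)
     + (LINT x:{X..}|lborel. complex_of_real (RR x) * (s * complex_of_real x powr (- s - 1)))"

lemma zeta_eq:
  assumes s: "1 < Re s" and X: "x0 \<le> X"
  shows "zeta_G nrm s = ZZ X s"
proof -
  define f where "f = (\<lambda>g. complex_of_real (nrm g) powr (- s))"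
  have X0: "0 < X" using X x0 by simp
  have s1: "s \<noteq> 1" using s by auto
  have hs: "(f has_sum zeta_G nrm s) UNIV"
    unfolding zeta_G_def f_def using summ[OF s] by (rule has_sum_infsum)
  have fl: "filterlim (\<lambda>Y. {g. nrm g \<le> Y}) (finite_subsets_at_top UNIV) at_top"
    unfolding filterlim_finite_subsets_at_top
  proof (intro allI impI)
    fix F :: "'a set" assume F: "finite F \<and> F \<subseteq> UNIV"
    show "eventually (\<lambda>Y. finite {g. nrm g \<le> Y} \<and> F \<subseteq> {g. nrm g \<le> Y} \<and> {g. nrm g \<le> Y} \<subseteq> UNIV) at_top"
      using eventually_ge_at_top[of "Max (insert 0 (nrm ` F))"]
    proof eventually_elim
      case (elim Y)
      have "F \<subseteq> {g. nrm g \<le> Y}"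
      proof
        fix g assume "g \<in> F"
        then have "nrm g \<le> Max (insert 0 (nrm ` F))" using F by (intro Max_ge) auto
        then show "g \<in> {g. nrm g \<le> Y}" using elim by simp
      qed
      then show ?case using fin by auto
    qed
  qed
  have lim1: "((\<lambda>Y. sum f {g. nrm g \<le> Y}) \<longlongrightarrow> zeta_G nrm s) at_top"
    using filterlim_compose[OF hs[unfolded has_sum_def] fl] by simp
  have t1: "((\<lambda>Y. complex_of_real (count_G nrm Y) * complex_of_real Y powr (- s)) \<longlongrightarrow> 0) at_top"
  proof (rule Lim_null_comparison)
    show "eventually (\<lambda>Y. norm (complex_of_real (count_G nrm Y) * complex_of_real Y powr (- s)) \<le> C1 * Y powr (1 - Re s)) at_top"
      using eventually_ge_at_top[of 1]
    proof eventually_elim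
      case (elim Y)
      have "norm (complex_of_real (count_G nrm Y) * complex_of_real Y powr (- s)) = count_G nrm Y * Y powr (- Re s)"
        using elim NN_nonneg[of Y] by (simp add: norm_mult norm_cpowr)
      also have "\<dots> \<le> C1 * Y * Y powr (- Re s)" using NN_le[of Y] elim by (intro mult_right_mono) auto
      also have "C1 * Y * Y powr (- Re s) = C1 * Y powr (1 - Re s)" using elim by (simp add: powr_diff powr_minus field_simps)
      finally show ?case .
    qed
    show "((\<lambda>Y. C1 * Y powr (1 - Re s)) \<longlongrightarrow> 0) at_top"
      using s by (intro tendsto_mult_right_zero tendsto_neg_powr filterlim_ident) auto
  qed
  have t2: "((\<lambda>Y. complex_of_real Y powr (1 - s)) \<longlongrightarrow> 0) at_top"
    using s by (intro tendsto_neg_powr_complex_of_real filterlim_ident) auto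
  have t3: "((\<lambda>Y. LINT x:{X..Y}|lborel. complex_of_real (RR x) * (s * complex_of_real x powr (- s - 1))) \<longlongrightarrow>
       (LINT x:{X..}|lborel. complex_of_real (RR x) * (s * complex_of_real x powr (- s - 1)))) at_top"
    by (rule tendsto_set_lebesgue_integral_at_top[OF _ tail_int(1)[OF X]]) (use s in auto)
  have lim2: "((\<lambda>Y. (\<Sum>g\<in>{g. nrm g \<le> X}. f g) + (complex_of_real (count_G nrm Y) * complex_of_real Y powr (- s)
     - complex_of_real (count_G nrm X) * complex_of_real X powr (- s)
     + complex_of_real A * s * (complex_of_real X powr (1 - s) - complex_of_real Y powr (1 - s)) / (s - 1)
     + (LINT x:{X..Y}|lborel. complex_of_real (RR x) * (s * complex_of_real x powr (- s - 1)))))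
     \<longlongrightarrow> (\<Sum>g\<in>{g. nrm g \<le> X}. f g) + (0
     - complex_of_real (count_G nrm X) * complex_of_real X powr (- s)
     + complex_of_real A * s * (complex_of_real X powr (1 - s) - 0) / (s - 1)
     + (LINT x:{X..}|lborel. complex_of_real (RR x) * (s * complex_of_real x powr (- s - 1))))) at_top"
    by (intro tendsto_intros t1 t2 t3) (use s1 in simp)
  have ev: "eventually (\<lambda>Y. sum f {g. nrm g \<le> Y} = (\<Sum>g\<in>{g. nrm g \<le> X}. f g) + (complex_of_real (count_G nrm Y) * complex_of_real Y powr (- s)
     - complex_of_real (count_G nrm X) * complex_of_real X powr (- s)
     + complex_of_real A * s * (complex_of_real X powr (1 - s) - complex_of_real Y powr (1 - s)) / (s - 1)
     + (LINT x:{X..Y}|lborel. complex_of_real (RR x) * (s * complex_of_real x powr (- s - 1))))) at_top"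
    using eventually_ge_at_top[of X]
  proof eventually_elim
    case (elim Y)
    have u: "{g. nrm g \<le> Y} = {g. nrm g \<le> X} \<union> {g. X < nrm g \<and> nrm g \<le> Y}" using elim by auto
    have f2: "finite {g. X < nrm g \<and> nrm g \<le> Y}" by (rule finite_subset[OF _ fin[of Y]]) auto
    have "sum f {g. nrm g \<le> Y} = sum f {g. nrm g \<le> X} + sum f {g. X < nrm g \<and> nrm g \<le> Y}"
      unfolding u by (rule sum.union_disjoint[OF fin f2]) auto
    then show ?case unfolding f_def star[OF X0 elim s1] by simp
  qed
  have lim3: "((\<lambda>Y. sum f {g. nrm g \<le> Y}) \<longlongrightarrow> (\<Sum>g\<in>{g. nrm g \<le> X}. f g) + (0
     - complex_of_real (count_G nrm X) * complex_of_real X powr (- s)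
     + complex_of_real A * s * (complex_of_real X powr (1 - s) - 0) / (s - 1)
     + (LINT x:{X..}|lborel. complex_of_real (RR x) * (s * complex_of_real x powr (- s - 1))))) at_top"
    using tendsto_cong[OF ev] lim2 by simp
  have "zeta_G nrm s = (\<Sum>g\<in>{g. nrm g \<le> X}. f g) + (0
     - complex_of_real (count_G nrm X) * complex_of_real X powr (- s)
     + complex_of_real A * s * (complex_of_real X powr (1 - s) - 0) / (s - 1)
     + (LINT x:{X..}|lborel. complex_of_real (RR x) * (s * complex_of_real x powr (- s - 1))))"
    by (rule tendsto_unique[OF _ lim1 lim3]) simp
  then show ?thesis unfolding ZZ_def f_def by simp
qed

lemma J_cont:
  assumes X: "x0 \<le> X"
  shows "((\<lambda>\<sigma>. LINT x:{X..}|lborel. complex_of_real (RR x) * (Complex \<sigma> t * complex_of_real x powr (- Complex \<sigma> t - 1)))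
     \<longlongrightarrow> (LINT x:{X..}|lborel. complex_of_real (RR x) * (Complex 1 t * complex_of_real x powr (- Complex 1 t - 1)))) (at_right 1)"
proof (rule tendsto_at_right_sequentially[of 1 2])
  fix S :: "nat \<Rightarrow> real"
  assume S1: "\<And>n. 1 < S n" and S2: "\<And>n. S n < 2" and "decseq S" and Sl: "S \<longlonglongrightarrow> 1"
  have X0: "0 < X" "1 < X" using X x0 by auto
  define w where "w = (\<lambda>x::real. indicator {X..} x *\<^sub>R ((2 + \<bar>t\<bar>) * C * (1 / (x * ln x powr \<gamma>))))"
  show "(\<lambda>n. LINT x:{X..}|lborel. complex_of_real (RR x) * (Complex (S n) t * complex_of_real x powr (- Complex (S n) t - 1)))
     \<longlonglongrightarrow> (LINT x:{X..}|lborel. complex_of_real (RR x) * (Complex 1 t * complex_of_real x powr (- Complex 1 t - 1)))"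
    unfolding set_lebesgue_integral_def
  proof (rule integral_dominated_convergence[where w = w])
    show "integrable lborel w"
      unfolding w_def using set_integrable_mult_right[OF tail_weight(1)[OF gam X0(2)], of "(2 + \<bar>t\<bar>) * C"]
      unfolding set_integrable_def by simp
    show "AE x in lborel. (\<lambda>n. indicator {X..} x *\<^sub>R (complex_of_real (RR x) * (Complex (S n) t * complex_of_real x powr (- Complex (S n) t - 1))))
        \<longlonglongrightarrow> indicator {X..} x *\<^sub>R (complex_of_real (RR x) * (Complex 1 t * complex_of_real x powr (- Complex 1 t - 1)))"
    proof (rule AE_I2)
      fix x :: real
      show "(\<lambda>n. indicator {X..} x *\<^sub>R (complex_of_real (RR x) * (Complex (S n) t * complex_of_real x powr (- Complex (S n) t - 1))))
        \<longlonglongrightarrow> indicator {X..} x *\<^sub>R (complex_of_real (RR x) * (Complex 1 t * complex_of_real x powr (- Complex 1 t - 1)))"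
      proof (cases "x \<in> {X..}")
        case True
        then have x: "0 < x" using X0 by auto
        have c: "(\<lambda>n. Complex (S n) t) \<longlonglongrightarrow> Complex 1 t" by (intro tendsto_intros Sl)
        show ?thesis by (intro tendsto_intros cpowr_tendsto[OF x] c)
      qed simp
    qed
    fix n
    show "AE x in lborel. norm (indicator {X..} x *\<^sub>R (complex_of_real (RR x) * (Complex (S n) t * complex_of_real x powr (- Complex (S n) t - 1)))) \<le> w x"
    proof (rule AE_I2)
      fix x :: real
      show "norm (indicator {X..} x *\<^sub>R (complex_of_real (RR x) * (Complex (S n) t * complex_of_real x powr (- Complex (S n) t - 1)))) \<le> w x"
      proof (cases "x \<in> {X..}")
        case True
        then have x: "x0 \<le> x" using X by auto
        have nb: "norm (Complex (S n) t) \<le> 2 + \<bar>t\<bar>"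
          using cmod_le[of "Complex (S n) t"] S1[of n] S2[of n] by simp
        have "norm (complex_of_real (RR x) * (Complex (S n) t * complex_of_real x powr (- Complex (S n) t - 1)))
           \<le> norm (Complex (S n) t) * C * (1 / (x * ln x powr \<gamma>))"
          by (rule tail_bound[OF x]) (use S1[of n] in simp)
        also have "\<dots> \<le> (2 + \<bar>t\<bar>) * C * (1 / (x * ln x powr \<gamma>))"
          using nb Cnn lnpow_ge1[OF x] x x0 by (intro mult_right_mono) auto
        finally show ?thesis using True unfolding w_def by simp
      qed (simp add: w_def)
    qed
  qed measurable
qed simp

lemma zeta_line:
  assumes t: "t \<noteq> 0" and X: "x0 \<le> X"
  shows "zeta_G_line nrm t = ZZ X (Complex 1 t)"
proof -
  have X0: "0 < X" using X x0 by auto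
  have c: "((\<lambda>\<sigma>. Complex \<sigma> t) \<longlongrightarrow> Complex 1 t) (at_right 1)" by (intro tendsto_intros)
  have ne: "Complex 1 t - 1 \<noteq> 0" using t by (simp add: complex_eq_iff)
  have L: "((\<lambda>\<sigma>. ZZ X (Complex \<sigma> t)) \<longlongrightarrow> ZZ X (Complex 1 t)) (at_right 1)"
    unfolding ZZ_def
    by (intro tendsto_intros cpowr_tendsto c J_cont[OF X] X0 ne) (use ge1 in \<open>auto intro: less_le_trans[OF zero_less_one]\<close>)
  have ev: "eventually (\<lambda>\<sigma>. ZZ X (Complex \<sigma> t) = zeta_G nrm (Complex \<sigma> t)) (at_right 1)"
    using eventually_at_right_less[of "1::real"] by eventually_elim (use zeta_eq X in simp)
  have "((\<lambda>\<sigma>. zeta_G nrm (Complex \<sigma> t)) \<longlongrightarrow> ZZ X (Complex 1 t)) (at_right 1)"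
    using tendsto_cong[OF ev] L by simp
  then show ?thesis unfolding zeta_G_line_def by (intro tendsto_Lim) auto
qed

lemma ZZ_bound:
  assumes t: "1 \<le> t" and X: "x0 \<le> X"
  shows "norm (ZZ X (Complex 1 t)) \<le> (C1 + 2 * count_G nrm 1 + C1 * ln X) + C1 + 2 * \<bar>A\<bar>
           + (1 + t) * C * (ln X powr (1 - \<gamma>) / (\<gamma> - 1))"
proof -
  define s where "s = Complex 1 t"
  have X0: "0 < X" "1 \<le> X" using X x0 by auto
  have Res: "Re s = 1" unfolding s_def by simp
  have ns: "norm s \<le> 1 + t" using cmod_le[of s] t unfolding s_def by simp
  have h: "norm (\<Sum>g\<in>{g. nrm g \<le> X}. complex_of_real (nrm g) powr (- s)) \<le> C1 + 2 * count_G nrm 1 + C1 * ln X"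
  proof -
    have "norm (\<Sum>g\<in>{g. nrm g \<le> X}. complex_of_real (nrm g) powr (- s)) \<le> (\<Sum>g\<in>{g. nrm g \<le> X}. norm (complex_of_real (nrm g) powr (- s)))"
      by (rule norm_sum)
    also have "\<dots> = (\<Sum>g\<in>{g. nrm g \<le> X}. nrm g powr (- 1))"
      using ge1 by (intro sum.cong refl) (simp add: norm_cpowr Res less_le_trans[OF zero_less_one])
    also have "\<dots> \<le> C1 + 2 * count_G nrm 1 + C1 * 1 * (LINT x:{1..X}|lborel. x powr (- 1))"
      using head_bound[of 1 X] X0 by simp
    also have "\<dots> = C1 + 2 * count_G nrm 1 + C1 * ln X" using int_inv_eq[OF X0(2)] by simp
    finally show ?thesis .
  qed
  have n2: "norm (complex_of_real (count_G nrm X) * complex_of_real X powr (- s)) \<le> C1"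
  proof -
    have "norm (complex_of_real (count_G nrm X) * complex_of_real X powr (- s)) = count_G nrm X * X powr (- 1)"
      using X0 NN_nonneg[of X] by (simp add: norm_mult norm_cpowr Res)
    also have "\<dots> \<le> (C1 * X) * X powr (- 1)" using NN_le[OF X0(1)] X0 by (intro mult_right_mono) auto
    also have "\<dots> = C1" using X0 by (simp add: powr_minus_divide)
    finally show ?thesis .
  qed
  have n3: "norm (complex_of_real A * s * complex_of_real X powr (1 - s) / (s - 1)) \<le> 2 * \<bar>A\<bar>"
  proof -
    have e1: "norm (complex_of_real X powr (1 - s)) = 1" using X0 by (simp add: norm_cpowr Res)
    have e2: "norm (s - 1) = t" unfolding s_def using t by (simp add: complex_diff norm_complex_def)
    have "norm (complex_of_real A * s * complex_of_real X powr (1 - s) / (s - 1)) = \<bar>A\<bar> * norm s / t"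
      by (simp add: norm_mult norm_divide e1 e2)
    also have "\<dots> \<le> \<bar>A\<bar> * (1 + t) / t" using ns t by (intro divide_right_mono mult_left_mono) auto
    also have "\<dots> \<le> \<bar>A\<bar> * (2 * t) / t" using t by (intro divide_right_mono mult_left_mono) auto
    also have "\<dots> = 2 * \<bar>A\<bar>" using t by simp
    finally show ?thesis .
  qed
  have n4: "norm (LINT x:{X..}|lborel. complex_of_real (RR x) * (s * complex_of_real x powr (- s - 1)))
      \<le> (1 + t) * C * (ln X powr (1 - \<gamma>) / (\<gamma> - 1))"
  proof -
    have "0 \<le> ln X powr (1 - \<gamma>) / (\<gamma> - 1)" using gam by simp
    then have "norm s * C * (ln X powr (1 - \<gamma>) / (\<gamma> - 1)) \<le> (1 + t) * C * (ln X powr (1 - \<gamma>) / (\<gamma> - 1))"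
      using ns Cnn by (intro mult_right_mono) auto
    with tail_int(2)[OF X, of s] Res show ?thesis by simp
  qed
  have "norm (ZZ X s) \<le> norm (\<Sum>g\<in>{g. nrm g \<le> X}. complex_of_real (nrm g) powr (- s))
     + norm (complex_of_real (count_G nrm X) * complex_of_real X powr (- s))
     + norm (complex_of_real A * s * complex_of_real X powr (1 - s) / (s - 1))
     + norm (LINT x:{X..}|lborel. complex_of_real (RR x) * (s * complex_of_real x powr (- s - 1)))"
    unfolding ZZ_def by (intro order.trans[OF norm_triangle_ineq] add_right_mono order.trans[OF norm_triangle_ineq4]) auto
  also have "\<dots> \<le> (C1 + 2 * count_G nrm 1 + C1 * ln X) + C1 + 2 * \<bar>A\<bar> + (1 + t) * C * (ln X powr (1 - \<gamma>) / (\<gamma> - 1))"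
    using h n2 n3 n4 by linarith
  finally show ?thesis unfolding s_def .
qed

lemma final_bound:
  "\<exists>K T. \<forall>t\<ge>T. norm (zeta_G_line nrm t) \<le> K * t powr (1 / \<gamma>)"
proof -
  define K where "K = (2 * C1 + 2 * count_G nrm 1 + 2 * \<bar>A\<bar>) + C1 + 2 * C / (\<gamma> - 1)"
  define T where "T = max 1 (ln x0 powr \<gamma>)"
  have "norm (zeta_G_line nrm t) \<le> K * t powr (1 / \<gamma>)" if tT: "t \<ge> T" for t
  proof -
    have t1: "1 \<le> t" using tT unfolding T_def by simp
    have lx0: "0 < ln x0" using x0 by simp
    define X where "X = exp (t powr (1 / \<gamma>))"
    have lnX: "ln X = t powr (1 / \<gamma>)" unfolding X_def by simp
    have "ln x0 = (ln x0 powr \<gamma>) powr (1 / \<gamma>)" using lx0 gam by (simp add: powr_powr)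
    also have "\<dots> \<le> t powr (1 / \<gamma>)" using tT gam unfolding T_def by (intro powr_mono2) auto
    finally have "ln x0 \<le> ln X" unfolding lnX .
    moreover have "0 < X" unfolding X_def by simp
    ultimately have X: "x0 \<le> X" using ln_le_cancel_iff[of x0 X] x0 by simp
    have tp1: "1 \<le> t powr (1 / \<gamma>)" using t1 gam by (simp add: ge_one_powr_ge_zero)
    have tail: "(1 + t) * C * (ln X powr (1 - \<gamma>) / (\<gamma> - 1)) \<le> 2 * C / (\<gamma> - 1) * t powr (1 / \<gamma>)"
    proof -
      have "ln X powr (1 - \<gamma>) = t powr ((1 - \<gamma>) / \<gamma>)" unfolding lnX using t1 by (simp add: powr_powr)
      then have "(1 + t) * ln X powr (1 - \<gamma>) \<le> (2 * t) * t powr ((1 - \<gamma>) / \<gamma>)"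
        using t1 mult_right_mono[of "1 + t" "2 * t" "t powr ((1 - \<gamma>) / \<gamma>)"] by simp
      also have "(2 * t) * t powr ((1 - \<gamma>) / \<gamma>) = 2 * t powr (1 / \<gamma>)"
      proof -
        have "t * t powr ((1 - \<gamma>) / \<gamma>) = t powr (1 + (1 - \<gamma>) / \<gamma>)" using t1 by (simp add: powr_add)
        also have "1 + (1 - \<gamma>) / \<gamma> = 1 / \<gamma>" using gam by (simp add: field_simps)
        finally show ?thesis by simp
      qed
      finally have "(1 + t) * ln X powr (1 - \<gamma>) \<le> 2 * t powr (1 / \<gamma>)" .
      then have "C / (\<gamma> - 1) * ((1 + t) * ln X powr (1 - \<gamma>)) \<le> C / (\<gamma> - 1) * (2 * t powr (1 / \<gamma>))"
        using Cnn gam by (intro mult_left_mono) auto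
      then show ?thesis by (simp add: field_simps)
    qed
    have "norm (zeta_G_line nrm t) = norm (ZZ X (Complex 1 t))" using zeta_line[OF _ X, of t] t1 by simp
    also have "\<dots> \<le> (C1 + 2 * count_G nrm 1 + C1 * ln X) + C1 + 2 * \<bar>A\<bar> + (1 + t) * C * (ln X powr (1 - \<gamma>) / (\<gamma> - 1))"
      by (rule ZZ_bound[OF t1 X])
    also have "\<dots> \<le> (2 * C1 + 2 * count_G nrm 1 + 2 * \<bar>A\<bar>) * t powr (1 / \<gamma>) + C1 * t powr (1 / \<gamma>) + 2 * C / (\<gamma> - 1) * t powr (1 / \<gamma>)"
    proof -
      have "(2 * C1 + 2 * count_G nrm 1 + 2 * \<bar>A\<bar>) * 1 \<le> (2 * C1 + 2 * count_G nrm 1 + 2 * \<bar>A\<bar>) * t powr (1 / \<gamma>)"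
        using tp1 C1_nn NN_nonneg[of 1] by (intro mult_left_mono) auto
      then show ?thesis using tail unfolding lnX by (simp add: algebra_simps)
    qed
    also have "\<dots> = K * t powr (1 / \<gamma>)" unfolding K_def by (simp add: algebra_simps)
    finally show ?thesis .
  qed
  then show ?thesis by blast
qed

end

theorem mainTheorem8:
  fixes nrm :: "'a::comm_monoid_mult \<Rightarrow> real" and A \<gamma> :: real
  assumes "arith_semigroup nrm"
    and "1 < \<gamma>" and "\<gamma> \<le> 2"
    and "(\<lambda>x. count_G nrm x - A * x) \<in> O(\<lambda>x. x / (ln x) powr \<gamma>)"
  shows "(\<gamma> < 2 \<longrightarrow> (\<lambda>t. norm (zeta_G_line nrm t)) \<in> O(\<lambda>t. t powr (1 / \<gamma>)))
       \<and> (\<gamma> = 2 \<longrightarrow> (\<lambda>t. norm (zeta_G_line nrm t)) \<in> O(\<lambda>t. sqrt (t * ln t)))"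
proof -
  have ge1: "\<And>g. nrm g \<ge> 1" and fin: "\<And>x. finite {g. nrm g \<le> x}"
    using assms(1) unfolding arith_semigroup_def by auto
  interpret asg nrm by unfold_locales (use ge1 fin in auto)
  from assms(4) obtain c where c: "c > 0"
    "eventually (\<lambda>x. norm (count_G nrm x - A * x) \<le> c * norm (x / ln x powr \<gamma>)) at_top"
    by (rule landau_o.bigE)
  then obtain x1 where x1: "\<And>x. x \<ge> x1 \<Longrightarrow> \<bar>count_G nrm x - A * x\<bar> \<le> c * \<bar>x / ln x powr \<gamma>\<bar>"
    by (auto simp: eventually_at_top_linorder)
  define x0 where "x0 = max 3 x1"
  have bnd: "\<bar>count_G nrm x - A * x\<bar> \<le> c * x / ln x powr \<gamma>" if "x0 \<le> x" for x
  proof -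
    have "0 < x" using that unfolding x0_def by simp
    moreover have "0 \<le> ln x powr \<gamma>" by simp
    ultimately have "\<bar>x / ln x powr \<gamma>\<bar> = x / ln x powr \<gamma>" by simp
    then show ?thesis using x1[of x] that unfolding x0_def by simp
  qed
  interpret asg2 nrm A c \<gamma> x0
    by unfold_locales (use assms(2) c(1) bnd in \<open>auto simp: x0_def\<close>)
  obtain K T where KT: "\<And>t. t \<ge> T \<Longrightarrow> norm (zeta_G_line nrm t) \<le> K * t powr (1 / \<gamma>)"
    using final_bound by blast
  define K' where "K' = max K 0"
  have KT': "norm (zeta_G_line nrm t) \<le> K' * t powr (1 / \<gamma>)" if "t \<ge> T" for t
  proof -
    have "K * t powr (1 / \<gamma>) \<le> K' * t powr (1 / \<gamma>)" unfolding K'_def by (intro mult_right_mono) auto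
    then show ?thesis using KT[OF that] by linarith
  qed
  show ?thesis
  proof (intro conjI impI)
    show "(\<lambda>t. norm (zeta_G_line nrm t)) \<in> O(\<lambda>t. t powr (1 / \<gamma>))"
    proof (rule bigoI[of _ K'])
      show "eventually (\<lambda>t. norm (norm (zeta_G_line nrm t)) \<le> K' * norm (t powr (1 / \<gamma>))) at_top"
        using eventually_ge_at_top[of T] by eventually_elim (use KT' in simp)
    qed
  next
    assume g2: "\<gamma> = 2"
    show "(\<lambda>t. norm (zeta_G_line nrm t)) \<in> O(\<lambda>t. sqrt (t * ln t))"
    proof (rule bigoI[of _ K'])
      show "eventually (\<lambda>t. norm (norm (zeta_G_line nrm t)) \<le> K' * norm (sqrt (t * ln t))) at_top"
        using eventually_ge_at_top[of "max T (exp 1)"]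
      proof eventually_elim
        case (elim t)
        have t: "exp 1 \<le> t" "T \<le> t" using elim by auto
        have tp: "0 < t" using t(1) by (smt (verit) exp_gt_zero)
        have lt: "1 \<le> ln t" using t(1) tp by (metis ln_exp ln_le_cancel_iff exp_gt_zero)
        have "t powr (1 / \<gamma>) = sqrt t" using g2 tp by (simp add: powr_half_sqrt)
        also have "sqrt t \<le> sqrt (t * ln t)" using lt tp by (intro real_sqrt_le_mono) (simp add: mult_le_cancel_left1)
        finally have "K' * t powr (1 / \<gamma>) \<le> K' * sqrt (t * ln t)" unfolding K'_def by (intro mult_left_mono) auto
        moreover have "0 \<le> t * ln t" by (rule mult_nonneg_nonneg) (use lt tp in linarith)+
        then have "\<bar>sqrt (t * ln t)\<bar> = sqrt (t * ln t)" by (rule abs_of_nonneg[OF real_sqrt_ge_zero])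
        ultimately show ?case using KT'[OF t(2)] by simp
      qed
    qed
  qed
qed

end
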